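(* Let $T$ be a graph on a countably infinite set $X$ with maximum degree at most $d$, let $\mu$ be a $T$-invariant mean on $X$ with associated regular Borel probability measure $\bar\mu$ on $\beta X$, and let $\mathcal G(T)$ be the associated graphing on $\beta X$. Then for every $r\ge1$ and every rooted finite graph $H$ of radius $r$ with maximum degree at most $d$, $$\mu(A(T,H))=\bar\mu(A(\mathcal G(T),H)).$$
   Context: A mean on $X$ is a finitely additive $\mu:2^X\to[0,1]$ with $\mu(X)=1$; $\bar\mu$ is the unique regular Borel probability on the Stone–Čech compactification $\beta X$ (ultrafilters on $X$) with $\bar\mu(U_A)=\mu(A)$, $U_A=\{\omega:A\in\omega\}$. A mean is $T$-invariant if it is invariant under some (equivalently every) action of a finitely generated group on $X$ whose Schreier graph with respect to some finite symmetric generating set is $T$ (Schreier graph: edge $\{x,y\}$ when $x\ne y$ and $s(x)=y$ for a generator $s$). Bijections $s$ of $X$ extend to $\beta X$ by $\tilde s(\omega)=\{s(A):A\in\omega\}$; $\mathcal G(T)$ is the graph on $\beta X$ with an edge $\{\omega,\omega'\}$ when $\omega\ne\omega'$ and $\tilde s(\omega)=\omega'$ for a generator $s$ of such an action (this does not depend on the chosen action). A rooted graph has radius $r$ if the maximal distance from the root is $r$. $A(T,H)$ is the set of $x\in X$ whose $r$-neighbourhood in $T$ rooted at $x$ is rooted isomorphic to $H$, and $A(\mathcal G(T),H)$ is the set of $\omega\in\beta X$ whose $r$-neighbourhood in $\mathcal G(T)$ is rooted isomorphic to $H$. *)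

theory Defs
  imports "HOL-Probability.Probability"
begin

definition ultrafilter_on :: "'a set set \<Rightarrow> bool" where
  "ultrafilter_on w \<longleftrightarrow> UNIV \<in> w \<and> {} \<notin> w \<and>
     (\<forall>A B. A \<in> w \<and> A \<subseteq> B \<longrightarrow> B \<in> w) \<and>
     (\<forall>A B. A \<in> w \<and> B \<in> w \<longrightarrow> A \<inter> B \<in> w) \<and>
     (\<forall>A. A \<in> w \<or> - A \<in> w)"

definition betaX :: "'a set set set" where
  "betaX = {w. ultrafilter_on w}"

definition UA :: "'a set \<Rightarrow> 'a set set set" where
  "UA A = {w \<in> betaX. A \<in> w}"

definition stone_open :: "'a set set set \<Rightarrow> bool" where
  "stone_open W \<longleftrightarrow> W \<subseteq> betaX \<and> (\<forall>w\<in>W. \<exists>A. w \<in> UA A \<and> UA A \<subseteq> W)"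

definition stone_compact :: "'a set set set \<Rightarrow> bool" where
  "stone_compact K \<longleftrightarrow> K \<subseteq> betaX \<and>
     (\<forall>C. (\<forall>W\<in>C. stone_open W) \<and> K \<subseteq> \<Union>C \<longrightarrow> (\<exists>F\<subseteq>C. finite F \<and> K \<subseteq> \<Union>F))"

definition regular_borel_prob :: "'a set set measure \<Rightarrow> bool" where
  "regular_borel_prob M \<longleftrightarrow> prob_space M \<and> space M = betaX \<and>
     sets M = sigma_sets betaX {W. stone_open W} \<and>
     (\<forall>B\<in>sets M.
        measure M B = (SUP K\<in>{K. K \<subseteq> B \<and> stone_compact K}. measure M K) \<and>
        measure M B = (INF U\<in>{U. B \<subseteq> U \<and> stone_open U}. measure M U))"

definition is_mean :: "('a set \<Rightarrow> real) \<Rightarrow> bool" where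
  "is_mean \<mu> \<longleftrightarrow> (\<forall>A. 0 \<le> \<mu> A \<and> \<mu> A \<le> 1) \<and> \<mu> UNIV = 1 \<and>
     (\<forall>A B. A \<inter> B = {} \<longrightarrow> \<mu> (A \<union> B) = \<mu> A + \<mu> B)"

(* S: finite symmetric generating set of a group acting on 'a (given by bijections) *)
definition sym_gen_set :: "('a \<Rightarrow> 'a) set \<Rightarrow> bool" where
  "sym_gen_set S \<longleftrightarrow> finite S \<and> (\<forall>s\<in>S. bij s \<and> inv s \<in> S)"

definition schreier_graph :: "('a \<Rightarrow> 'a) set \<Rightarrow> 'a \<Rightarrow> 'a \<Rightarrow> bool" where
  "schreier_graph S x y \<longleftrightarrow> x \<noteq> y \<and> (\<exists>s\<in>S. s x = y)"

(* invariance under the generators (equivalently under the generated group) *)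
definition invariant_mean :: "('a \<Rightarrow> 'a) set \<Rightarrow> ('a set \<Rightarrow> real) \<Rightarrow> bool" where
  "invariant_mean S \<mu> \<longleftrightarrow> (\<forall>s\<in>S. \<forall>A. \<mu> (s ` A) = \<mu> A)"

definition ext_map :: "('a \<Rightarrow> 'a) \<Rightarrow> 'a set set \<Rightarrow> 'a set set" where
  "ext_map s w = {s ` A | A. A \<in> w}"

definition graphing :: "('a \<Rightarrow> 'a) set \<Rightarrow> 'a set set \<Rightarrow> 'a set set \<Rightarrow> bool" where
  "graphing S w w' \<longleftrightarrow> w \<in> betaX \<and> w' \<in> betaX \<and> w \<noteq> w' \<and> (\<exists>s\<in>S. ext_map s w = w')"

definition gball :: "('b \<Rightarrow> 'b \<Rightarrow> bool) \<Rightarrow> nat \<Rightarrow> 'b \<Rightarrow> 'b set" where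
  "gball G r x = {y. \<exists>n\<le>r. (G ^^ n) x y}"

definition nbhd_iso :: "('b \<Rightarrow> 'b \<Rightarrow> bool) \<Rightarrow> nat \<Rightarrow> 'b \<Rightarrow> 'c set \<Rightarrow> ('c \<Rightarrow> 'c \<Rightarrow> bool) \<Rightarrow> 'c \<Rightarrow> bool" where
  "nbhd_iso G r x V E h \<longleftrightarrow> (\<exists>f. bij_betw f (gball G r x) V \<and> f x = h \<and>
     (\<forall>y\<in>gball G r x. \<forall>z\<in>gball G r x. G y z \<longleftrightarrow> E (f y) (f z)))"

definition Aset :: "'b set \<Rightarrow> ('b \<Rightarrow> 'b \<Rightarrow> bool) \<Rightarrow> nat \<Rightarrow> 'c set \<Rightarrow> ('c \<Rightarrow> 'c \<Rightarrow> bool) \<Rightarrow> 'c \<Rightarrow> 'b set" where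
  "Aset Vert G r V E h = {x \<in> Vert. nbhd_iso G r x V E h}"

definition rooted_graph_radius :: "'c set \<Rightarrow> ('c \<Rightarrow> 'c \<Rightarrow> bool) \<Rightarrow> 'c \<Rightarrow> nat \<Rightarrow> bool" where
  "rooted_graph_radius V E h r \<longleftrightarrow> finite V \<and> h \<in> V \<and>
     (\<forall>y z. E y z \<longrightarrow> y \<in> V \<and> z \<in> V) \<and> (\<forall>y z. E y z \<longrightarrow> E z y) \<and> (\<forall>y. \<not> E y y) \<and>
     V = gball E r h \<and> (\<exists>y\<in>V. y \<notin> gball E (r - 1) h)"

definition max_degree_le :: "'b set \<Rightarrow> ('b \<Rightarrow> 'b \<Rightarrow> bool) \<Rightarrow> nat \<Rightarrow> bool" where
  "max_degree_le V G d \<longleftrightarrow> (\<forall>x\<in>V. finite {y. G x y} \<and> card {y. G x y} \<le> d)"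

end

theory Submission imports Defs begin
function col :: "('a\<Rightarrow>'a) \<Rightarrow> ('a\<Rightarrow>'a) \<Rightarrow> ('a\<Rightarrow>nat) \<Rightarrow> 'a \<Rightarrow> nat" where
"col g gi idx x = (LEAST k. k \<noteq> (if idx (g x) < idx x then col g gi idx (g x) else 3)
    \<and> k \<noteq> (if idx (gi x) < idx x then col g gi idx (gi x) else 3))"
  by auto
termination by (relation "Wellfounded.measure (\<lambda>(g,gi,idx,x). idx x)") auto

declare col.simps[simp del]

lemma least_two: "(LEAST k::nat. k \<noteq> a \<and> k \<noteq> b) \<noteq> a \<and> (LEAST k::nat. k \<noteq> a \<and> k \<noteq> b) \<noteq> b
   \<and> (LEAST k::nat. k \<noteq> a \<and> k \<noteq> b) \<le> 2"
proof -
  obtain k::nat where k: "k \<le> 2" "k \<noteq> a \<and> k \<noteq> b"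
  proof (cases "a = 0 \<or> b = 0")
    case True
    then show ?thesis
    proof (cases "a = 1 \<or> b = 1")
      case True then show ?thesis using \<open>a = 0 \<or> b = 0\<close> that[of 2] by auto
    next
      case False then show ?thesis using that[of 1] by auto
    qed
  next
    case False then show ?thesis using that[of 0] by auto
  qed
  have "(LEAST k::nat. k \<noteq> a \<and> k \<noteq> b) \<noteq> a \<and> (LEAST k::nat. k \<noteq> a \<and> k \<noteq> b) \<noteq> b"
    by (rule LeastI[of _ k]) (use k in auto)
  moreover have "(LEAST k::nat. k \<noteq> a \<and> k \<noteq> b) \<le> k" by (rule Least_le) (use k in auto)
  ultimately show ?thesis using k by auto
qed

lemma coloring:
  assumes "inj (idx::'a\<Rightarrow>nat)" "\<And>x. gi (g x) = x"
  shows "\<forall>x. g x \<noteq> x \<longrightarrow> col g gi idx (g x) \<noteq> col g gi idx x"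
proof (intro allI impI)
  fix x assume gx: "g x \<noteq> x"
  have ne: "idx (g x) \<noteq> idx x" using assms(1) gx by (meson injD)
  show "col g gi idx (g x) \<noteq> col g gi idx x"
  proof (cases "idx (g x) < idx x")
    case True
    have "col g gi idx x \<noteq> (if idx (g x) < idx x then col g gi idx (g x) else 3)"
      by (subst col.simps) (rule least_two[THEN conjunct1])
    then show ?thesis using True by auto
  next
    case False
    then have lt: "idx (gi (g x)) < idx (g x)" using ne assms(2) by auto
    have "col g gi idx (g x) \<noteq> (if idx (gi (g x)) < idx (g x) then col g gi idx (gi (g x)) else 3)"
      by (subst col.simps) (rule least_two[THEN conjunct2, THEN conjunct1])
    then show ?thesis using lt assms(2) by auto
  qed
qed

lemma col_le: "col g gi idx x \<le> 2"
  by (subst col.simps) (rule least_two[THEN conjunct2, THEN conjunct2])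

lemma uf: assumes "w \<in> betaX" shows
  "UNIV \<in> w" "{} \<notin> w" "\<And>A B. A \<in> w \<Longrightarrow> A \<subseteq> B \<Longrightarrow> B \<in> w"
  "\<And>A B. A \<in> w \<Longrightarrow> B \<in> w \<Longrightarrow> A \<inter> B \<in> w" "\<And>A. A \<in> w \<or> - A \<in> w"
  using assms unfolding betaX_def ultrafilter_on_def by blast+

lemma uf_nonempty: "w \<in> betaX \<Longrightarrow> A \<in> w \<Longrightarrow> \<exists>x. x \<in> A"
  using uf(2) by (metis ex_in_conv)

lemma uf_Inter: assumes "w \<in> betaX" "finite I" "\<forall>i\<in>I. B i \<in> w" shows "(\<Inter>i\<in>I. B i) \<in> w"
  using assms(2,3)
proof (induction I rule: finite_induct)
  case empty then show ?case using uf(1)[OF assms(1)] by simp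
next
  case (insert i I) then show ?case using uf(4)[OF assms(1)] by simp
qed

lemma ext_map_pre: assumes "bij g" shows "ext_map g w = {B. g -` B \<in> w}"
proof (intro set_eqI iffI)
  fix B assume "B \<in> ext_map g w"
  then obtain A where "A \<in> w" "B = g ` A" unfolding ext_map_def by auto
  then show "B \<in> {B. g -` B \<in> w}" using assms by (simp add: bij_is_inj inj_vimage_image_eq)
next
  fix B assume "B \<in> {B. g -` B \<in> w}"
  moreover have "B = g ` (g -` B)" using assms by (simp add: bij_is_surj surj_image_vimage_eq)
  ultimately show "B \<in> ext_map g w" unfolding ext_map_def by (metis (mono_tags, lifting) mem_Collect_eq)
qed

lemma ext_map_beta: assumes "bij g" "w \<in> betaX" shows "ext_map g w \<in> betaX"
  using uf[OF assms(2)] unfolding ext_map_pre[OF assms(1)] betaX_def ultrafilter_on_def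
  by (auto simp: vimage_Compl) (meson vimage_mono)

lemma ext_map_comp: "ext_map (s \<circ> t) w = ext_map s (ext_map t w)"
  unfolding ext_map_def
proof (intro set_eqI iffI)
  fix B assume "B \<in> {(s \<circ> t) ` A |A. A \<in> w}"
  then obtain A where "A \<in> w" "B = s ` (t ` A)" by (auto simp: image_comp)
  then show "B \<in> {s ` A |A. A \<in> {t ` A |A. A \<in> w}}" by blast
next
  fix B assume "B \<in> {s ` A |A. A \<in> {t ` A |A. A \<in> w}}"
  then obtain A where "A \<in> w" "B = s ` (t ` A)" by blast
  then show "B \<in> {(s \<circ> t) ` A |A. A \<in> w}" by (auto simp: image_comp)
qed

lemma ext_map_id: "ext_map id w = w"
  unfolding ext_map_def by auto

lemma key:
  assumes "bij (p::'a\<Rightarrow>'a)" "bij (q::'a\<Rightarrow>'a)" "w \<in> betaX" "inj (idx::'a\<Rightarrow>nat)"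
  shows "ext_map p w = ext_map q w \<longleftrightarrow> {x. p x = q x} \<in> w"
proof
  assume Ew: "{x. p x = q x} \<in> w"
  let ?E = "{x. p x = q x}"
  have "p -` B \<in> w \<longleftrightarrow> q -` B \<in> w" for B
  proof -
    have "p -` B \<inter> ?E = q -` B \<inter> ?E" by auto
    then show ?thesis using uf(3,4)[OF assms(3)] Ew by (metis inf_le1)
  qed
  then show "ext_map p w = ext_map q w" unfolding ext_map_pre[OF assms(1)] ext_map_pre[OF assms(2)]
    by auto
next
  assume eq: "ext_map p w = ext_map q w"
  show "{x. p x = q x} \<in> w"
  proof (rule ccontr)
    assume nE: "{x. p x = q x} \<notin> w"
    define g where "g = inv q \<circ> p"
    define gi where "gi = inv p \<circ> q"
    have gi: "gi (g x) = x" for x unfolding g_def gi_def using assms(1,2)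
      by (simp add: bij_is_inj bij_is_surj inv_f_f surj_f_inv_f)
    have fix_iff: "g x = x \<longleftrightarrow> p x = q x" for x unfolding g_def using assms(2)
      by (metis bij_inv_eq_iff comp_apply)
    define c where "c = col g gi idx"
    have cg: "\<And>x. g x \<noteq> x \<Longrightarrow> c (g x) \<noteq> c x" using coloring[OF assms(4), of gi g] gi c_def by blast
    have cle: "c x \<le> 2" for x unfolding c_def by (rule col_le)
    define C where "C k = {x. g x \<noteq> x \<and> c x = k}" for k
    have N: "- {x. p x = q x} \<in> w" using uf(5)[OF assms(3)] nE by blast
    have "\<exists>k. C k \<in> w"
    proof (rule ccontr)
      assume "\<nexists>k. C k \<in> w"
      then have "- C 0 \<in> w" "- C 1 \<in> w" "- C 2 \<in> w" using uf(5)[OF assms(3)] by blast+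
      then have "- {x. p x = q x} \<inter> (- C 0 \<inter> (- C 1 \<inter> - C 2)) \<in> w" using N uf(4)[OF assms(3)] by metis
      moreover have "- {x. p x = q x} \<inter> (- C 0 \<inter> (- C 1 \<inter> - C 2)) = {}"
      proof (rule equals0I)
        fix x assume x: "x \<in> - {x. p x = q x} \<inter> (- C 0 \<inter> (- C 1 \<inter> - C 2))"
        then have "g x \<noteq> x" using fix_iff by simp
        moreover have "c x = 0 \<or> c x = 1 \<or> c x = 2" using cle[of x] by auto
        ultimately have "x \<in> C 0 \<or> x \<in> C 1 \<or> x \<in> C 2" unfolding C_def by auto
        then show False using x by blast
      qed
      ultimately show False using uf(2)[OF assms(3)] by simp
    qed
    then obtain k where Ck: "C k \<in> w" by blast
    have disj: "x \<in> C k \<Longrightarrow> g x \<notin> C k" for x using cg unfolding C_def by auto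
    define B where "B = q ` C k"
    have qB: "q -` B = C k" unfolding B_def using assms(2) by (simp add: bij_is_inj inj_vimage_image_eq)
    then have "B \<in> ext_map q w" using ext_map_pre[OF assms(2)] Ck by auto
    then have "p -` B \<in> w" using eq ext_map_pre[OF assms(1)] by auto
    moreover have "p -` B \<inter> C k = {}"
    proof -
      have "p x \<in> B \<Longrightarrow> g x \<in> C k" for x unfolding B_def g_def using assms(2)
        by (auto simp: bij_is_inj inv_f_f)
      then show ?thesis using disj by auto
    qed
    ultimately show False using Ck uf(2,4)[OF assms(3)] by metis
  qed
qed

fun ev :: "('s \<Rightarrow> 'b \<Rightarrow> 'b) \<Rightarrow> 's list \<Rightarrow> 'b \<Rightarrow> 'b" where
  "ev F [] x = x" | "ev F (s#u) x = F s (ev F u x)"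

definition Wd :: "'s set \<Rightarrow> nat \<Rightarrow> 's list set" where
  "Wd S n = {u. set u \<subseteq> S \<and> length u \<le> n}"

lemma ball_words:
  assumes cl: "\<And>s y. s\<in>S \<Longrightarrow> y\<in>D \<Longrightarrow> F s y \<in> D" and x: "x\<in>D"
    and G: "\<And>y z. G y z \<longleftrightarrow> (y\<noteq>z \<and> y\<in>D \<and> z\<in>D \<and> (\<exists>s\<in>S. F s y = z))"
  shows "gball G r x = (\<lambda>u. ev F u x) ` Wd S r"
proof -
  have fwd: "(G^^n) x y \<Longrightarrow> \<exists>u. set u \<subseteq> S \<and> length u \<le> n \<and> y = ev F u x" for n y
  proof (induction n arbitrary: y)
    case 0 then show ?case by (intro exI[of _ "[]"]) auto
  next
    case (Suc n)
    then obtain y' where y': "(G^^n) x y'" "G y' y" by (meson relpowp_Suc_E)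
    obtain u where u: "set u \<subseteq> S" "length u \<le> n" "y' = ev F u x" using Suc.IH y'(1) by blast
    obtain s where "s \<in> S" "F s y' = y" using G y'(2) by blast
    then show ?case using u by (intro exI[of _ "s#u"]) auto
  qed
  have inD: "set u \<subseteq> S \<Longrightarrow> ev F u x \<in> D" for u by (induction u) (auto simp: x cl)
  have bwd: "set u \<subseteq> S \<Longrightarrow> \<exists>n\<le>length u. (G^^n) x (ev F u x)" for u
  proof (induction u)
    case Nil then show ?case by auto
  next
    case (Cons s u)
    then obtain n where n: "n \<le> length u" "(G^^n) x (ev F u x)" by auto
    show ?case
    proof (cases "F s (ev F u x) = ev F u x")
      case True then show ?thesis using n by (intro exI[of _ n]) auto
    next
      case False
      have "G (ev F u x) (F s (ev F u x))" using False Cons.prems inD[of u] cl[of s "ev F u x"] G by auto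
      then have "(G^^Suc n) x (ev F (s#u) x)" using relpowp_Suc_I[OF n(2)] by simp
      then show ?thesis using n(1) by (intro exI[of _ "Suc n"]) auto
    qed
  qed
  show ?thesis unfolding gball_def Wd_def
  proof (intro set_eqI iffI)
    fix y assume "y \<in> {y. \<exists>n\<le>r. (G ^^ n) x y}"
    then show "y \<in> (\<lambda>u. ev F u x) ` {u. set u \<subseteq> S \<and> length u \<le> r}" using fwd by fastforce
  next
    fix y assume "y \<in> (\<lambda>u. ev F u x) ` {u. set u \<subseteq> S \<and> length u \<le> r}"
    then obtain u where u: "set u \<subseteq> S" "length u \<le> r" "y = ev F u x" by blast
    then obtain n where "n \<le> length u" "(G^^n) x y" using bwd by blast
    then show "y \<in> {y. \<exists>n\<le>r. (G ^^ n) x y}" using u(2) le_trans by blast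
  qed
qed

lemma ev_inD: assumes "\<And>s y. s\<in>S \<Longrightarrow> y\<in>D \<Longrightarrow> F s y \<in> D" "x\<in>D"
  shows "set u \<subseteq> S \<Longrightarrow> ev F u x \<in> D"
  by (induction u) (auto simp: assms)

lemma transfer:
  assumes cla: "\<And>s y. s\<in>S \<Longrightarrow> y\<in>Da \<Longrightarrow> Fa s y \<in> Da" and xa: "xa\<in>Da"
    and Ga: "\<And>y z. Ga y z \<longleftrightarrow> (y\<noteq>z \<and> y\<in>Da \<and> z\<in>Da \<and> (\<exists>s\<in>S. Fa s y = z))"
  assumes clb: "\<And>s y. s\<in>S \<Longrightarrow> y\<in>Db \<Longrightarrow> Fb s y \<in> Db" and xb: "xb\<in>Db"
    and Gb: "\<And>y z. Gb y z \<longleftrightarrow> (y\<noteq>z \<and> y\<in>Db \<and> z\<in>Db \<and> (\<exists>s\<in>S. Fb s y = z))"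
  and eq: "\<And>u v. u\<in>Wd S (Suc r) \<Longrightarrow> v\<in>Wd S (Suc r) \<Longrightarrow> (ev Fa u xa = ev Fa v xa) \<longleftrightarrow> (ev Fb u xb = ev Fb v xb)"
  and iso: "nbhd_iso Ga r xa V E h"
  shows "nbhd_iso Gb r xb V E h"
proof -
  define ea where "ea u = ev Fa u xa" for u
  define eb where "eb u = ev Fb u xb" for u
  have B1: "gball Ga r xa = ea ` Wd S r" unfolding ea_def by (rule ball_words[OF cla xa Ga])
  have B2: "gball Gb r xb = eb ` Wd S r" unfolding eb_def by (rule ball_words[OF clb xb Gb])
  have WW: "Wd S r \<subseteq> Wd S (Suc r)" unfolding Wd_def by auto
  have eq': "u\<in>Wd S (Suc r) \<Longrightarrow> v\<in>Wd S (Suc r) \<Longrightarrow> ea u = ea v \<longleftrightarrow> eb u = eb v" for u v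
    unfolding ea_def eb_def using eq by blast
  obtain f where f: "bij_betw f (gball Ga r xa) V" "f xa = h"
    "\<forall>y\<in>gball Ga r xa. \<forall>z\<in>gball Ga r xa. Ga y z \<longleftrightarrow> E (f y) (f z)"
    using iso unfolding nbhd_iso_def by blast
  define \<psi> where "\<psi> y = ea (SOME u. u \<in> Wd S r \<and> eb u = y)" for y
  have \<psi>e: "\<psi> (eb u) = ea u" if "u \<in> Wd S r" for u
  proof -
    have "\<exists>u'. u' \<in> Wd S r \<and> eb u' = eb u" using that by blast
    then have s: "(SOME u'. u' \<in> Wd S r \<and> eb u' = eb u) \<in> Wd S r \<and> eb (SOME u'. u' \<in> Wd S r \<and> eb u' = eb u) = eb u"
      by (rule someI_ex)
    then show ?thesis unfolding \<psi>_def using eq' that WW by blast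
  qed
  have bij\<psi>: "bij_betw \<psi> (gball Gb r xb) (gball Ga r xa)"
    unfolding B1 B2 bij_betw_def
  proof
    show "inj_on \<psi> (eb ` Wd S r)"
    proof (rule inj_onI)
      fix y z assume "y \<in> eb ` Wd S r" "z \<in> eb ` Wd S r" "\<psi> y = \<psi> z"
      then obtain u v where "u \<in> Wd S r" "v \<in> Wd S r" "y = eb u" "z = eb v" "ea u = ea v"
        using \<psi>e by auto
      then show "y = z" using eq' WW by blast
    qed
    show "\<psi> ` eb ` Wd S r = ea ` Wd S r" using \<psi>e by (auto simp: image_iff)
  qed
  have nil: "[] \<in> Wd S r" unfolding Wd_def by auto
  have root: "\<psi> xb = xa" using \<psi>e[OF nil] unfolding ea_def eb_def by simp
  have edge: "Gb (eb u) (eb v) \<longleftrightarrow> Ga (ea u) (ea v)" if "u \<in> Wd S r" "v \<in> Wd S r" for u v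
  proof -
    have uS: "set u \<subseteq> S" "set v \<subseteq> S" using that unfolding Wd_def by auto
    have d: "ea u \<in> Da" "ea v \<in> Da" "eb u \<in> Db" "eb v \<in> Db"
      unfolding ea_def eb_def using ev_inD[where S=S and D=Da and F=Fa, OF cla xa] ev_inD[where S=S and D=Db and F=Fb, OF clb xb] uS by auto
    have su: "s \<in> S \<Longrightarrow> s # u \<in> Wd S (Suc r)" for s using that unfolding Wd_def by auto
    have "Gb (eb u) (eb v) \<longleftrightarrow> eb u \<noteq> eb v \<and> (\<exists>s\<in>S. eb (s#u) = eb v)"
      using Gb d unfolding eb_def by auto
    also have "\<dots> \<longleftrightarrow> ea u \<noteq> ea v \<and> (\<exists>s\<in>S. ea (s#u) = ea v)"
      using eq' su that WW by blast
    also have "\<dots> \<longleftrightarrow> Ga (ea u) (ea v)"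
      using Ga d unfolding ea_def by auto
    finally show ?thesis .
  qed
  show ?thesis unfolding nbhd_iso_def
  proof (intro exI[of _ "f \<circ> \<psi>"] conjI)
    show "bij_betw (f \<circ> \<psi>) (gball Gb r xb) V" using bij_betw_trans[OF bij\<psi> f(1)] .
    show "(f \<circ> \<psi>) xb = h" using root f(2) by simp
    show "\<forall>y\<in>gball Gb r xb. \<forall>z\<in>gball Gb r xb. Gb y z = E ((f \<circ> \<psi>) y) ((f \<circ> \<psi>) z)"
    proof (intro ballI)
      fix y z assume "y \<in> gball Gb r xb" "z \<in> gball Gb r xb"
      then obtain u v where uv: "u \<in> Wd S r" "v \<in> Wd S r" "y = eb u" "z = eb v" unfolding B2 by auto
      have "ea u \<in> gball Ga r xa" "ea v \<in> gball Ga r xa" using uv unfolding B1 by auto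
      then show "Gb y z = E ((f \<circ> \<psi>) y) ((f \<circ> \<psi>) z)" using edge[OF uv(1,2)] f(3) uv \<psi>e by auto
    qed
  qed
qed

lemma ev_fun: "ev (\<lambda>s y. s y) u x = foldr (\<circ>) u id x"
  by (induction u) auto

lemma ev_ext: "ev ext_map u w = ext_map (foldr (\<circ>) u id) w"
proof (induction u)
  case Nil show ?case using ext_map_id[of w, unfolded id_def] by simp
next
  case (Cons a u)
  have "ev ext_map (a#u) w = ext_map a (ev ext_map u w)" by simp
  also have "\<dots> = ext_map a (ext_map (foldr (\<circ>) u id) w)" by (simp only: Cons.IH)
  also have "\<dots> = ext_map (a \<circ> foldr (\<circ>) u id) w" by (rule ext_map_comp[symmetric])
  also have "\<dots> = ext_map (foldr (\<circ>) (a#u) id) w" by simp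
  finally show ?case .
qed

lemma bij_foldr: "\<forall>s\<in>set u. bij s \<Longrightarrow> bij (foldr (\<circ>) u id)"
  by (induction u) (auto intro: bij_comp)

theorem proposition4p3:
  fixes T :: "'a \<Rightarrow> 'a \<Rightarrow> bool" and d :: nat and \<mu> :: "'a set \<Rightarrow> real"
    and S :: "('a \<Rightarrow> 'a) set" and M :: "'a set set measure"
    and r :: nat and V :: "'c set" and E :: "'c \<Rightarrow> 'c \<Rightarrow> bool" and h :: 'c
  assumes "countable (UNIV :: 'a set)" and "infinite (UNIV :: 'a set)"
    and "max_degree_le UNIV T d"
    and "sym_gen_set S" and "schreier_graph S = T"
    and "is_mean \<mu>" and "invariant_mean S \<mu>"
    and "regular_borel_prob M" and "\<forall>A. measure M (UA A) = \<mu> A"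
    and "r \<ge> 1" and "rooted_graph_radius V E h r" and "max_degree_le V E d"
  shows "Aset betaX (graphing S) r V E h \<in> sets M \<and>
         \<mu> (Aset UNIV T r V E h) = measure M (Aset betaX (graphing S) r V E h)"
proof -
  have finS: "finite S" and bijS: "\<And>s. s \<in> S \<Longrightarrow> bij s" using assms(4) unfolding sym_gen_set_def by auto
  obtain idx :: "'a \<Rightarrow> nat" where idx: "inj idx" using assms(1) unfolding countable_def by blast
  define F1 :: "('a\<Rightarrow>'a) \<Rightarrow> 'a \<Rightarrow> 'a" where "F1 = (\<lambda>s y. s y)"
  have cl1: "\<And>s y. s\<in>S \<Longrightarrow> y\<in>UNIV \<Longrightarrow> F1 s y \<in> UNIV" by simp
  have G1: "\<And>y z. T y z \<longleftrightarrow> (y\<noteq>z \<and> y\<in>UNIV \<and> z\<in>UNIV \<and> (\<exists>s\<in>S. F1 s y = z))"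
    using assms(5) unfolding schreier_graph_def F1_def by auto
  have cl2: "\<And>s y. s\<in>S \<Longrightarrow> y\<in>betaX \<Longrightarrow> ext_map s y \<in> betaX" using ext_map_beta bijS by blast
  have G2: "\<And>y z. graphing S y z \<longleftrightarrow> (y\<noteq>z \<and> y\<in>betaX \<and> z\<in>betaX \<and> (\<exists>s\<in>S. ext_map s y = z))"
    unfolding graphing_def by auto
  define A where "A = Aset UNIV T r V E h"
  define W2 where "W2 = Wd S (Suc r)"
  have finW: "finite W2" unfolding W2_def Wd_def using finite_lists_length_le[OF finS] by simp
  define Eq where "Eq u v = {x. ev F1 u x = ev F1 v x}" for u v
  have pat: "ev ext_map u w = ev ext_map v w \<longleftrightarrow> Eq u v \<in> w"
    if "w \<in> betaX" "u \<in> W2" "v \<in> W2" for u v w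
  proof -
    have "bij (foldr (\<circ>) u id)" "bij (foldr (\<circ>) v id)" using that(2,3) bijS bij_foldr
      unfolding W2_def Wd_def by blast+
    from key[OF this that(1) idx] show ?thesis
      unfolding ev_ext Eq_def F1_def ev_fun by simp
  qed
  have main: "w \<in> Aset betaX (graphing S) r V E h \<longleftrightarrow> w \<in> UA A" if w: "w \<in> betaX" for w
  proof -
    define B where "B u v = (if Eq u v \<in> w then Eq u v else - Eq u v)" for u v
    define Q where "Q = (\<Inter>u\<in>W2. \<Inter>v\<in>W2. B u v)"
    have Bw: "B u v \<in> w" for u v
    proof (cases "Eq u v \<in> w")
      case True then show ?thesis unfolding B_def by simp
    next
      case False then show ?thesis unfolding B_def using uf(5)[OF w, of "Eq u v"] by simp
    qed
    have Qw: "Q \<in> w" unfolding Q_def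
      by (rule uf_Inter[OF w finW]) (use uf_Inter[OF w finW] Bw in blast)
    have tr: "nbhd_iso T r x V E h \<longleftrightarrow> nbhd_iso (graphing S) r w V E h" if "x \<in> Q" for x
    proof -
      have eqv: "(ev F1 u x = ev F1 v x) \<longleftrightarrow> (ev ext_map u w = ev ext_map v w)"
        if "u \<in> W2" "v \<in> W2" for u v
      proof -
        have "x \<in> B u v" using \<open>x \<in> Q\<close> that unfolding Q_def by blast
        then have xin: "x \<in> (if Eq u v \<in> w then Eq u v else - Eq u v)" unfolding B_def .
        show ?thesis
        proof (cases "Eq u v \<in> w")
          case True
          then have "ev F1 u x = ev F1 v x" using xin unfolding Eq_def by simp
          then show ?thesis using True pat[OF w that] by simp
        next
          case False
          then have "ev F1 u x \<noteq> ev F1 v x" using xin unfolding Eq_def by simp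
          then show ?thesis using False pat[OF w that] by simp
        qed
      qed
      have eqv1: "(ev F1 u x = ev F1 v x) \<longleftrightarrow> (ev ext_map u w = ev ext_map v w)"
        if "u \<in> Wd S (Suc r)" "v \<in> Wd S (Suc r)" for u v using eqv that unfolding W2_def by blast
      have eqv2: "(ev ext_map u w = ev ext_map v w) \<longleftrightarrow> (ev F1 u x = ev F1 v x)"
        if "u \<in> Wd S (Suc r)" "v \<in> Wd S (Suc r)" for u v using eqv1 that by blast
      show ?thesis
      proof
        assume "nbhd_iso T r x V E h"
        show "nbhd_iso (graphing S) r w V E h"
          using transfer[where S=S and Da=UNIV and Fa=F1 and Db=betaX and Fb=ext_map and xa=x and xb=w
                and Ga=T and Gb="graphing S" and r=r and V=V and E=E and h=h,
                OF cl1 UNIV_I G1 cl2 w G2 eqv1 \<open>nbhd_iso T r x V E h\<close>] .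
      next
        assume "nbhd_iso (graphing S) r w V E h"
        show "nbhd_iso T r x V E h"
          using transfer[where S=S and Db=UNIV and Fb=F1 and Da=betaX and Fa=ext_map and xb=x and xa=w
                and Gb=T and Ga="graphing S" and r=r and V=V and E=E and h=h,
                OF cl2 w G2 cl1 UNIV_I G1 eqv2 \<open>nbhd_iso (graphing S) r w V E h\<close>] .
      qed
    qed
    show ?thesis
    proof
      assume wa: "w \<in> Aset betaX (graphing S) r V E h"
      show "w \<in> UA A"
      proof (rule ccontr)
        assume "w \<notin> UA A"
        then have "- A \<in> w" using uf(5)[OF w] w unfolding UA_def by auto
        then have "Q \<inter> - A \<in> w" using Qw uf(4)[OF w] by blast
        then obtain x where "x \<in> Q" "x \<notin> A" using uf_nonempty[OF w] by blast
        have "nbhd_iso (graphing S) r w V E h" using wa unfolding Aset_def by blast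
        moreover have "\<not> nbhd_iso T r x V E h" using \<open>x \<notin> A\<close> unfolding A_def Aset_def by blast
        ultimately show False using tr[OF \<open>x \<in> Q\<close>] by blast
      qed
    next
      assume "w \<in> UA A"
      then have "Q \<inter> A \<in> w" using Qw uf(4)[OF w] unfolding UA_def by blast
      then obtain x where "x \<in> Q" "x \<in> A" using uf_nonempty[OF w] by blast
      then have "nbhd_iso T r x V E h" unfolding A_def Aset_def by blast
      then have "nbhd_iso (graphing S) r w V E h" using tr[OF \<open>x \<in> Q\<close>] by blast
      then show "w \<in> Aset betaX (graphing S) r V E h" using w unfolding Aset_def by blast
    qed
  qed
  have AU: "Aset betaX (graphing S) r V E h = UA A"
  proof
    show "Aset betaX (graphing S) r V E h \<subseteq> UA A" using main unfolding Aset_def by blast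
    show "UA A \<subseteq> Aset betaX (graphing S) r V E h" using main unfolding UA_def by blast
  qed
  have "stone_open (UA A)" unfolding stone_open_def UA_def by blast
  then have "UA A \<in> sets M" using assms(8) unfolding regular_borel_prob_def
    by (auto intro: sigma_sets.Basic)
  then show ?thesis using AU assms(9) unfolding A_def by simp
qed
end
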